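(* Let $\Lambda$ be a positive integer, $r\in[\Lambda-1]$, and $K_\alpha\ge 0$ integers for $\alpha\in[\Lambda-r]$, not all zero. For the MADC model with Generalized Combinatorial MRG (GC-MRG) having $\Lambda$ mapper nodes and $K=\sum_{\alpha\in[\Lambda-r]}K_\alpha\binom{\Lambda}{\alpha}$ reducer nodes, the computation load is $r$ and the communication load $$L(r)=\frac{1}{K}\sum_{\alpha\in[\Lambda-r]}\frac{K_\alpha\binom{\Lambda-r}{\alpha}}{\binom{r+\alpha}{r}-1}$$ is achievable.
   Context: Notation: $[0,n)=\{0,1,\dots,n-1\}$, $[n]=\{1,\dots,n\}$. MADC (multi-access distributed computing) model: There are $\Lambda$ mapper nodes indexed by $[0,\Lambda)$ and $K$ reducer nodes. There are $N$ input files $w_0,\dots,w_{N-1}\in\mathbb{F}_{2^d}$ and $Q$ output functions $\phi_q:\mathbb{F}_{2^d}^N\to\mathbb{F}_{2^b}$, $q\in[0,Q)$, of the form $\phi_q(w_0,\dots,w_{N-1})=h_q(v_{q,0},\dots,v_{q,N-1})$, where $v_{q,n}=g_{q,n}(w_n)\in\mathbb{F}_{2^t}$ is called an intermediate value (IV). Each reducer node $k$ is assigned a set $\mathcal W_k\subseteq[0,Q)$ of $Q/K$ output functions, these sets being pairwise disjoint. The files are partitioned into $F$ disjoint batches of $N/F$ files each. Map phase: each mapper node $\lambda$ stores a set $M_\lambda$ of batches and computes all IVs $v_{q,n}$, $q\in[0,Q)$, for all files $w_n$ in its stored batches. Each reducer node is connected to a set of mapper nodes and has access to every batch stored at any mapper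 node it is connected to, together with all IVs computed from those batches. Shuffle phase: each reducer node $k$ broadcasts to all other reducer nodes, error-free, a message $\mathbf X_k$ of $l_k$ bits that is a function of the IVs it has access to. Reduce phase: each reducer node $k$ must recover all IVs $v_{q,n}$ with $q\in\mathcal W_k$, $n\in[0,N)$, from the received messages and the IVs it has access to. The computation load is $r=\sum_{\lambda}|M_\lambda|/F$ and the communication load is $L=\sum_{k}l_k/(QNt)$. A communication load $L$ is achievable for a given model if there exists a shuffle/reduce scheme satisfying all decoding requirements that attains $L$ (for a suitable choice of the number of files per batch, the number of functions per reducer, and the IV length $t$). GC-MRG (Generalized Combinatorial MRG): the files are split into $F=\binom{\Lambda}{r}$ batches $B_T$, one for each $T\subset[0,\Lambda)$ with $|T|=r$; mapper node $\lambda$ stores exactly the batches $B_T$ with $\lambda\in T$; for each $\alpha\in[\Lambda-r]$ and each $\alpha$-subset $U\subset[0,\Lambda)$ there are exactly $K_\alpha$ reducer nodes connected exactly to the mapper nodes in $U$ (such a reducer has access to $B_T$ iff $T\cap U\neq\emptyset$). (Reducer nodes connected to more than $\Lambda-r$ mapper nodes would access all batches and are not counted.) *)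

theory Defs
  imports Complex_Main
begin

text \<open>Mapper nodes are 0..<Lam. Batches are indexed by the r-subsets T of mapper nodes.\<close>
definition rsubsets :: "nat \<Rightarrow> nat \<Rightarrow> nat set set" where
  "rsubsets Lam r = {T. T \<subseteq> {0..<Lam} \<and> card T = r}"

text \<open>Mapper node lam stores exactly the batches B_T with lam in T; computation load
  = (sum over mappers of number of stored batches) / F.\<close>
definition gc_comp_load :: "nat \<Rightarrow> nat \<Rightarrow> real" where
  "gc_comp_load Lam r =
     (\<Sum>lam<Lam. real (card {T \<in> rsubsets Lam r. lam \<in> T})) / real (card (rsubsets Lam r))"

text \<open>Reducer nodes of GC-MRG: pairs (U, j) where U is an alpha-subset of mappers,
  1 <= alpha <= Lam - r, and j < K_alpha enumerates the K_alpha reducers connected to U.\<close>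
definition gc_reducers :: "nat \<Rightarrow> nat \<Rightarrow> (nat \<Rightarrow> nat) \<Rightarrow> (nat set \<times> nat) set" where
  "gc_reducers Lam r Ka = {(U, j). U \<subseteq> {0..<Lam} \<and> 1 \<le> card U \<and> card U \<le> Lam - r \<and> j < Ka (card U)}"

text \<open>An IV assignment v q n gives the t-bit value of v_{q,n} as bits v q n i, i < t.
  Two assignments agree on a set S of (q,n) pairs.\<close>
definition agree_on :: "nat \<Rightarrow> (nat \<times> nat) set \<Rightarrow> (nat \<Rightarrow> nat \<Rightarrow> nat \<Rightarrow> bool)
                         \<Rightarrow> (nat \<Rightarrow> nat \<Rightarrow> nat \<Rightarrow> bool) \<Rightarrow> bool" where
  "agree_on t S v v' = (\<forall>(q, n) \<in> S. \<forall>i<t. v q n i = v' q n i)"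

text \<open>Achievability of communication load L for the GC-MRG MADC model:
  there exist a number bsz > 0 of files per batch (N = bsz * F), a number m > 0 of output
  functions per reducer (Q = m * K), an IV length t > 0, an assignment bat of files to batches
  (each r-subset T gets exactly bsz files), a disjoint assignment W of m functions to each reducer,
  and shuffle encoders E (message of l k bits, depending only on IVs accessible to reducer k),
  such that every reducer can decode its required IVs from all messages and its accessible IVs,
  and the load equals L.\<close>
definition gc_achievable :: "nat \<Rightarrow> nat \<Rightarrow> (nat \<Rightarrow> nat) \<Rightarrow> real \<Rightarrow> bool" where
  "gc_achievable Lam r Ka L =
    (let Red = gc_reducers Lam r Ka; F = card (rsubsets Lam r) in
     \<exists>(bsz::nat) (m::nat) (t::nat) (bat::nat \<Rightarrow> nat set) (W::nat set \<times> nat \<Rightarrow> nat set)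
         (E::nat set \<times> nat \<Rightarrow> (nat \<Rightarrow> nat \<Rightarrow> nat \<Rightarrow> bool) \<Rightarrow> bool list) (l::nat set \<times> nat \<Rightarrow> nat).
       bsz > 0 \<and> m > 0 \<and> t > 0 \<and>
       (let N = bsz * F; Q = m * card Red;
            acc = (\<lambda>k. {(q, n). q < Q \<and> n < N \<and> bat n \<inter> fst k \<noteq> {}});
            req = (\<lambda>k. {(q, n). q \<in> W k \<and> n < N}) in
        (\<forall>n<N. bat n \<in> rsubsets Lam r) \<and>
        (\<forall>T \<in> rsubsets Lam r. card {n. n < N \<and> bat n = T} = bsz) \<and>
        (\<forall>k \<in> Red. W k \<subseteq> {0..<Q} \<and> card (W k) = m) \<and>
        (\<forall>k \<in> Red. \<forall>k' \<in> Red. k \<noteq> k' \<longrightarrow> W k \<inter> W k' = {}) \<and>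
        (\<forall>k \<in> Red. \<forall>v::nat \<Rightarrow> nat \<Rightarrow> nat \<Rightarrow> bool. length (E k v) = l k) \<and>
        (\<forall>k \<in> Red. \<forall>v v'. agree_on t (acc k) v v' \<longrightarrow> E k v = E k v') \<and>
        (\<forall>k \<in> Red. \<forall>v v'. agree_on t (acc k) v v' \<and> (\<forall>j \<in> Red. E j v = E j v')
                        \<longrightarrow> agree_on t (req k) v v') \<and>
        L = (\<Sum>k \<in> Red. real (l k)) / (real Q * real N * real t)))"

end

theory Submission
  imports Defs
begin

definition enum :: "'a set \<Rightarrow> 'a \<Rightarrow> nat" where
  "enum A = (SOME h. bij_betw h A {0..<card A})"

lemma enum_bij: "finite A \<Longrightarrow> bij_betw (enum A) A {0..<card A}"
  unfolding enum_def by (rule someI_ex[OF ex_bij_betw_finite_nat])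

definition subs :: "nat set \<Rightarrow> nat \<Rightarrow> nat set set" where
  "subs S a = {U. U \<subseteq> S \<and> card U = a}"

lemma finite_subs: "finite S \<Longrightarrow> finite (subs S a)"
  unfolding subs_def by (rule finite_subset[of _ "Pow S"]) auto

lemma card_subs: "finite S \<Longrightarrow> card (subs S a) = card S choose a"
  unfolding subs_def by (rule n_subsets)

definition idx :: "nat set \<Rightarrow> nat \<Rightarrow> nat set \<Rightarrow> nat set \<Rightarrow> nat" where
  "idx S a U W = (if enum (subs S a) W < enum (subs S a) U then enum (subs S a) W
                  else enum (subs S a) W - 1)"

lemma idx_lt:
  assumes "finite S" "U \<in> subs S a" "W \<in> subs S a" "W \<noteq> U"
  shows "idx S a U W < card (subs S a) - 1"
proof -
  let ?e = "enum (subs S a)"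
  have b: "bij_betw ?e (subs S a) {0..<card (subs S a)}" using enum_bij finite_subs assms(1) by blast
  have "?e W < card (subs S a)" "?e U < card (subs S a)" using b assms(2,3) bij_betwE by fastforce+
  moreover have "?e W \<noteq> ?e U" using b assms(2-4) by (metis bij_betw_inv_into_left)
  ultimately show ?thesis unfolding idx_def by auto
qed

lemma idx_surj:
  assumes "finite S" "U \<in> subs S a" "c < card (subs S a) - 1"
  shows "\<exists>W\<in>subs S a. W \<noteq> U \<and> idx S a U W = c"
proof -
  let ?e = "enum (subs S a)"
  have b: "bij_betw ?e (subs S a) {0..<card (subs S a)}" using enum_bij finite_subs assms(1) by blast
  define w where "w = (if c < ?e U then c else c + 1)"
  have "w < card (subs S a)" using assms(3) w_def by auto
  then obtain W where W: "W \<in> subs S a" "?e W = w"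
    using b by (metis atLeastLessThan_iff bij_betw_iff_bijections zero_le)
  have "W \<noteq> U" using W w_def by (auto split: if_splits)
  moreover have "idx S a U W = c" unfolding idx_def using W w_def by auto
  ultimately show ?thesis using W by blast
qed

definition pv :: "(nat \<Rightarrow> nat \<Rightarrow> nat \<Rightarrow> bool) \<Rightarrow> nat \<times> nat \<times> nat \<Rightarrow> bool" where
  "pv v x = (case x of (q, n, i) \<Rightarrow> v q n i)"

definition parity :: "(nat \<Rightarrow> nat \<Rightarrow> nat \<Rightarrow> bool) \<Rightarrow> (nat \<times> nat \<times> nat) set \<Rightarrow> bool" where
  "parity v P = odd (card {x\<in>P. pv v x})"

lemma parity_cong: "(\<And>x. x \<in> P \<Longrightarrow> pv v x = pv v' x) \<Longrightarrow> parity v P = parity v' P"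
proof -
  assume h: "\<And>x. x \<in> P \<Longrightarrow> pv v x = pv v' x"
  have "{x\<in>P. pv v x} = {x\<in>P. pv v' x}" using h by blast
  then show ?thesis unfolding parity_def by simp
qed

lemma parity_dec:
  assumes "finite R" "p \<notin> R" "\<And>x. x \<in> R \<Longrightarrow> pv v x = pv v' x"
    "parity v (insert p R) = parity v' (insert p R)"
  shows "pv v p = pv v' p"
proof -
  have e: "{x\<in>R. pv v x} = {x\<in>R. pv v' x}" using assms(3) by auto
  have f: "finite {x\<in>R. pv v' x}" using assms(1) by auto
  have n: "p \<notin> {x\<in>R. pv v' x}" using assms(2) by auto
  define A where "A = {x\<in>R. pv v' x}"
  have cA: "card (insert p A) = Suc (card A)" using f n A_def by simp
  have h1: "{x\<in>insert p R. pv v x} = (if pv v p then insert p A else A)" using e A_def by auto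
  have h2: "{x\<in>insert p R. pv v' x} = (if pv v' p then insert p A else A)" using A_def by auto
  show ?thesis
  proof (rule ccontr)
    assume ne: "pv v p \<noteq> pv v' p"
    have "odd (card (if pv v p then insert p A else A)) = odd (card (if pv v' p then insert p A else A))"
      using assms(4) h1 h2 unfolding parity_def by simp
    then show False using ne cA by (cases "pv v p") auto
  qed
qed

definition g :: "nat \<Rightarrow> nat \<Rightarrow> nat" where "g r a = (r + a) choose r"
definition tt :: "nat \<Rightarrow> nat \<Rightarrow> nat" where "tt Lam r = (\<Prod>a\<in>{1..Lam-r}. g r a - 1)"
definition pp :: "nat \<Rightarrow> nat \<Rightarrow> nat \<Rightarrow> nat" where "pp Lam r a = tt Lam r div (g r a - 1)"

lemma g_ge2: assumes "1 \<le> r" "1 \<le> a" shows "g r a \<ge> 2"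
proof -
  obtain r' a' where ra: "r = Suc r'" "a = Suc a'" using assms by (metis Suc_le_D One_nat_def)
  have "g r a = (r' + Suc a' choose r') + (r' + Suc a' choose Suc r')" unfolding g_def ra
    by (metis add_Suc binomial_Suc_Suc)
  moreover have "0 < (r' + Suc a' choose r')" "0 < (r' + Suc a' choose Suc r')" by simp_all
  ultimately show ?thesis by linarith
qed

lemma pp_prop: assumes "1 \<le> r" "a \<in> {1..Lam-r}"
  shows "(g r a - 1) * pp Lam r a = tt Lam r" "pp Lam r a > 0" "tt Lam r > 0"
proof -
  have d: "g r a - 1 dvd tt Lam r" unfolding tt_def using assms by (intro dvd_prodI) auto
  show 1: "(g r a - 1) * pp Lam r a = tt Lam r" unfolding pp_def using d by simp
  show 2: "tt Lam r > 0" unfolding tt_def using g_ge2[OF assms(1)]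
    by (intro prod_pos) (fastforce)
  show "pp Lam r a > 0" using 1 2 by (metis gr0I mult_0_right)
qed

lemma finite_rsubsets: "finite (rsubsets Lam r)"
  unfolding rsubsets_def by (rule finite_subset[of _ "Pow {0..<Lam}"]) auto

lemma card_rsubsets: "card (rsubsets Lam r) = Lam choose r"
  unfolding rsubsets_def using n_subsets[of "{0..<Lam}" r] by simp

lemma finite_Red: "finite (gc_reducers Lam r Ka)"
proof -
  have "gc_reducers Lam r Ka \<subseteq> Pow {0..<Lam} \<times> {..<Max (Ka ` {0..Lam})}"
  proof
    fix k assume "k \<in> gc_reducers Lam r Ka"
    then obtain U j where k: "k = (U,j)" "U \<subseteq> {0..<Lam}" "j < Ka (card U)" unfolding gc_reducers_def by auto
    have "card U \<le> Lam" using k(2) by (metis card_atLeastLessThan card_mono finite_atLeastLessThan minus_nat.diff_0)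
    then have "Ka (card U) \<le> Max (Ka ` {0..Lam})" by (intro Max_ge) auto
    then show "k \<in> Pow {0..<Lam} \<times> {..<Max (Ka ` {0..Lam})}" using k by auto
  qed
  then show ?thesis by (rule finite_subset) auto
qed

definition GS :: "nat \<Rightarrow> nat \<Rightarrow> nat set \<Rightarrow> nat set set" where
  "GS Lam r W = {S. W \<subseteq> S \<and> S \<subseteq> {0..<Lam} \<and> card S = r + card W}"

lemma card_GS: assumes "W \<subseteq> {0..<Lam}" shows "card (GS Lam r W) = (Lam - card W) choose r"
proof -
  have fW: "finite W" using assms finite_subset by blast
  let ?B = "{T. T \<subseteq> {0..<Lam} - W \<and> card T = r}"
  have cB: "card ?B = (Lam - card W) choose r"
    using n_subsets[of "{0..<Lam} - W" r] assms fW by (simp add: card_Diff_subset)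
  have "bij_betw (\<lambda>T. T \<union> W) ?B (GS Lam r W)"
  proof (rule bij_betw_byWitness[where f'="\<lambda>S. S - W"])
    show "\<forall>a\<in>?B. a \<union> W - W = a" by auto
    show "\<forall>a\<in>GS Lam r W. a - W \<union> W = a" unfolding GS_def by auto
    show "(\<lambda>T. T \<union> W) ` ?B \<subseteq> GS Lam r W"
    proof
      fix S assume "S \<in> (\<lambda>T. T \<union> W) ` ?B"
      then obtain T where T: "T \<subseteq> {0..<Lam} - W" "card T = r" "S = T \<union> W" by auto
      have "finite T" using T(1) finite_subset by blast
      then have "card S = r + card W" using T fW by (simp add: card_Un_disjoint Int_commute disjoint_iff subset_iff)
      then show "S \<in> GS Lam r W" unfolding GS_def using T assms by auto
    qed
    show "(\<lambda>S. S - W) ` GS Lam r W \<subseteq> ?B"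
    proof
      fix T assume "T \<in> (\<lambda>S. S - W) ` GS Lam r W"
      then obtain S where S: "W \<subseteq> S" "S \<subseteq> {0..<Lam}" "card S = r + card W" "T = S - W"
        unfolding GS_def by auto
      have "finite S" using S(2) finite_subset by blast
      then have "card T = r" using S fW by (simp add: card_Diff_subset)
      then show "T \<in> ?B" using S by auto
    qed
  qed
  then have "card ?B = card (GS Lam r W)" by (rule bij_betw_same_card)
  with cB show ?thesis by simp
qed

lemma finite_GS: "finite (GS Lam r W)"
  unfolding GS_def by (rule finite_subset[of _ "Pow {0..<Lam}"]) auto

definition lst :: "'a set \<Rightarrow> 'a list" where "lst A = (SOME xs. set xs = A \<and> distinct xs)"

lemma lst: "finite A \<Longrightarrow> set (lst A) = A \<and> distinct (lst A)"
  unfolding lst_def by (rule someI_ex[OF finite_distinct_list])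

lemma length_lst: "finite A \<Longrightarrow> length (lst A) = card A"
  using lst distinct_card by metis

lemma sum_Red:
  fixes f :: "nat \<Rightarrow> nat"
  shows "(\<Sum>k\<in>gc_reducers Lam r Ka. f (card (fst k))) = (\<Sum>a\<in>{1..Lam-r}. Ka a * (Lam choose a) * f a)"
proof -
  let ?R = "gc_reducers Lam r Ka"
  have "(\<Sum>k\<in>?R. f (card (fst k))) = (\<Sum>a\<in>{1..Lam-r}. \<Sum>k\<in>{k\<in>?R. card (fst k) = a}. f (card (fst k)))"
    by (rule sum.group[symmetric, OF finite_Red]) (auto simp: gc_reducers_def)
  also have "\<dots> = (\<Sum>a\<in>{1..Lam-r}. Ka a * (Lam choose a) * f a)"
  proof (rule sum.cong[OF refl])
    fix a assume a: "a \<in> {1..Lam-r}"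
    have e: "{k\<in>?R. card (fst k) = a} = subs {0..<Lam} a \<times> {..<Ka a}"
      using a unfolding gc_reducers_def subs_def by auto
    have "(\<Sum>k\<in>{k\<in>?R. card (fst k) = a}. f (card (fst k))) = (\<Sum>k\<in>subs {0..<Lam} a \<times> {..<Ka a}. f a)"
      by (rule sum.cong) (auto simp: e subs_def)
    also have "\<dots> = Ka a * (Lam choose a) * f a" by (simp add: card_cartesian_product card_subs)
    finally show "(\<Sum>k\<in>{k\<in>?R. card (fst k) = a}. f (card (fst k))) = Ka a * (Lam choose a) * f a" .
  qed
  finally show ?thesis .
qed

definition batf :: "nat \<Rightarrow> nat \<Rightarrow> nat \<Rightarrow> nat set" where
  "batf Lam r n = inv_into (rsubsets Lam r) (enum (rsubsets Lam r)) n"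
definition Mset :: "nat \<Rightarrow> nat \<Rightarrow> nat set \<times> nat \<Rightarrow> (nat set \<times> nat) set" where
  "Mset Lam r k = GS Lam r (fst k) \<times> {0..<pp Lam r (card (fst k))}"
definition Pos :: "nat \<Rightarrow> nat \<Rightarrow> (nat \<Rightarrow> nat) \<Rightarrow> nat set \<times> nat \<Rightarrow> nat set \<times> nat \<Rightarrow> (nat \<times> nat \<times> nat) set" where
  "Pos Lam r Ka k x = (case x of (S, b) \<Rightarrow>
     (\<lambda>U. (enum (gc_reducers Lam r Ka) (U, snd k), enum (rsubsets Lam r) (S - U),
           idx S (card (fst k)) U (fst k) * pp Lam r (card (fst k)) + b))
     ` (subs S (card (fst k)) - {fst k}))"
definition Enc :: "nat \<Rightarrow> nat \<Rightarrow> (nat \<Rightarrow> nat) \<Rightarrow> nat set \<times> nat \<Rightarrow> (nat \<Rightarrow> nat \<Rightarrow> nat \<Rightarrow> bool) \<Rightarrow> bool list" where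
  "Enc Lam r Ka k v = map (\<lambda>x. parity v (Pos Lam r Ka k x)) (lst (Mset Lam r k))"

lemma agreeD: "agree_on t S v v' \<Longrightarrow> (q, n) \<in> S \<Longrightarrow> i < t \<Longrightarrow> v q n i = v' q n i"
  unfolding agree_on_def by blast

lemma finite_Mset: "finite (Mset Lam r k)"
  unfolding Mset_def using finite_GS by auto

lemma bat_props:
  shows "n < card (rsubsets Lam r) \<Longrightarrow> batf Lam r n \<in> rsubsets Lam r \<and> enum (rsubsets Lam r) (batf Lam r n) = n"
    and "T \<in> rsubsets Lam r \<Longrightarrow> batf Lam r (enum (rsubsets Lam r) T) = T \<and> enum (rsubsets Lam r) T < card (rsubsets Lam r)"
proof -
  have b: "bij_betw (enum (rsubsets Lam r)) (rsubsets Lam r) {0..<card (rsubsets Lam r)}"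
    using enum_bij finite_rsubsets by blast
  show "n < card (rsubsets Lam r) \<Longrightarrow> batf Lam r n \<in> rsubsets Lam r \<and> enum (rsubsets Lam r) (batf Lam r n) = n"
    unfolding batf_def using b by (simp add: bij_betw_def f_inv_into_f inv_into_into)
  show "T \<in> rsubsets Lam r \<Longrightarrow> batf Lam r (enum (rsubsets Lam r) T) = T \<and> enum (rsubsets Lam r) T < card (rsubsets Lam r)"
    unfolding batf_def using b by (auto simp: bij_betw_def)
qed

lemma grp:
  assumes "W \<subseteq> {0..<Lam}" "S \<in> GS Lam r W" "U \<in> subs S (card W)"
  shows "U \<subseteq> {0..<Lam}" "S - U \<in> rsubsets Lam r" "card (subs S (card W)) = g r (card W)"
    "finite S" "card U = card W"
    "\<And>U'. U' \<in> subs S (card W) \<Longrightarrow> U' \<noteq> U \<Longrightarrow> (S - U') \<inter> U \<noteq> {}"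
proof -
  have S: "W \<subseteq> S" "S \<subseteq> {0..<Lam}" "card S = r + card W" using assms(2) unfolding GS_def by auto
  have U: "U \<subseteq> S" "card U = card W" using assms(3) unfolding subs_def by auto
  show fS: "finite S" using S(2) finite_subset by blast
  show "U \<subseteq> {0..<Lam}" using S U by blast
  show "card U = card W" by fact
  have fU: "finite U" using fS U finite_subset by blast
  show "S - U \<in> rsubsets Lam r" unfolding rsubsets_def using S U fU by (auto simp: card_Diff_subset)
  show "card (subs S (card W)) = g r (card W)" unfolding g_def using card_subs[OF fS] S
    by (metis add.commute binomial_symmetric add_diff_cancel_left' le_add1)
  fix U' assume U': "U' \<in> subs S (card W)" "U' \<noteq> U"
  have "\<not> U \<subseteq> U'"
  proof
    assume "U \<subseteq> U'"
    moreover have "finite U'" using U' fS unfolding subs_def using finite_subset by blast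
    moreover have "card U' = card U" using U' U unfolding subs_def by auto
    ultimately show False using U' card_subset_eq by metis
  qed
  then show "(S - U') \<inter> U \<noteq> {}" using U by blast
qed

lemma arith1: "(c::nat) < G \<Longrightarrow> b < p \<Longrightarrow> c * p + b < G * p"
proof -
  assume "c < G" "b < p"
  then have "c * p + b < (c + 1) * p" by simp
  also have "\<dots> \<le> G * p" using \<open>c < G\<close> by (intro mult_le_mono1) simp
  finally show ?thesis .
qed

lemma Red_iff: "(W, j) \<in> gc_reducers Lam r Ka \<longleftrightarrow>
   W \<subseteq> {0..<Lam} \<and> 1 \<le> card W \<and> card W \<le> Lam - r \<and> j < Ka (card W)"
  unfolding gc_reducers_def by simp

lemma pos_ok:
  assumes r1: "1 \<le> r" and k: "(W,j) \<in> gc_reducers Lam r Ka" and x: "(S,b) \<in> Mset Lam r (W,j)"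
    and U: "U \<in> subs S (card W)" "U \<noteq> W"
  shows "(U,j) \<in> gc_reducers Lam r Ka"
    "enum (gc_reducers Lam r Ka) (U,j) < card (gc_reducers Lam r Ka)"
    "enum (rsubsets Lam r) (S-U) < card (rsubsets Lam r)"
    "batf Lam r (enum (rsubsets Lam r) (S-U)) \<inter> W \<noteq> {}"
    "idx S (card W) U W * pp Lam r (card W) + b < tt Lam r"
proof -
  have W: "W \<subseteq> {0..<Lam}" "1 \<le> card W" "card W \<le> Lam - r" "j < Ka (card W)" using k Red_iff by auto
  have S: "S \<in> GS Lam r W" "b < pp Lam r (card W)" using x unfolding Mset_def by auto
  have WS: "W \<in> subs S (card W)" using S unfolding GS_def subs_def by auto
  note G = grp[OF W(1) S(1) U(1)]
  note G2 = grp[OF W(1) S(1) WS]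
  show R: "(U,j) \<in> gc_reducers Lam r Ka" using G W Red_iff by auto
  show "enum (gc_reducers Lam r Ka) (U,j) < card (gc_reducers Lam r Ka)"
    using R enum_bij[OF finite_Red] by (metis atLeastLessThan_iff bij_betwE)
  show "enum (rsubsets Lam r) (S-U) < card (rsubsets Lam r)" using bat_props(2) G(2) by blast
  show "batf Lam r (enum (rsubsets Lam r) (S-U)) \<inter> W \<noteq> {}"
    using bat_props(2)[OF G(2)] G2(6)[OF U] by simp
  have il: "idx S (card W) U W < g r (card W) - 1" using idx_lt[OF G(4) U(1) WS] U(2) G(3) by auto
  have "(g r (card W) - 1) * pp Lam r (card W) = tt Lam r" using pp_prop(1)[OF r1] W by auto
  then show "idx S (card W) U W * pp Lam r (card W) + b < tt Lam r"
    using arith1[OF il S(2)] by simp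
qed

lemma enc_eq:
  assumes r1: "1 \<le> r" and k: "k \<in> gc_reducers Lam r Ka"
    and ag: "agree_on (tt Lam r) {(q, n). q < card (gc_reducers Lam r Ka) \<and> n < card (rsubsets Lam r)
                 \<and> batf Lam r n \<inter> fst k \<noteq> {}} v v'"
  shows "Enc Lam r Ka k v = Enc Lam r Ka k v'"
proof -
  obtain W j where kk: "k = (W, j)" by (cases k)
  have "parity v (Pos Lam r Ka k x) = parity v' (Pos Lam r Ka k x)" if x: "x \<in> Mset Lam r k" for x
  proof -
    obtain S b where xx: "x = (S, b)" by (cases x)
    show ?thesis
    proof (rule parity_cong)
      fix y assume "y \<in> Pos Lam r Ka k x"
      then obtain U where U: "U \<in> subs S (card W)" "U \<noteq> W"
        and y: "y = (enum (gc_reducers Lam r Ka) (U, j), enum (rsubsets Lam r) (S - U),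
           idx S (card W) U W * pp Lam r (card W) + b)"
        unfolding Pos_def xx kk by auto
      note P = pos_ok[OF r1 k[unfolded kk] x[unfolded xx kk] U]
      show "pv v y = pv v' y" unfolding y pv_def
        apply simp apply (rule agreeD[OF ag]) using P kk by auto
    qed
  qed
  then show ?thesis unfolding Enc_def using lst[OF finite_Mset] by auto
qed

lemma dec_ok:
  assumes r1: "1 \<le> r" and k: "k \<in> gc_reducers Lam r Ka"
    and ag: "agree_on (tt Lam r) {(q, n). q < card (gc_reducers Lam r Ka) \<and> n < card (rsubsets Lam r)
                 \<and> batf Lam r n \<inter> fst k \<noteq> {}} v v'"
    and msg: "\<forall>j\<in>gc_reducers Lam r Ka. Enc Lam r Ka j v = Enc Lam r Ka j v'"
  shows "agree_on (tt Lam r) {(q, n). q \<in> {enum (gc_reducers Lam r Ka) k} \<and> n < card (rsubsets Lam r)} v v'"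
  unfolding agree_on_def
proof (clarify)
  fix n i assume n: "n < card (rsubsets Lam r)" and i: "i < tt Lam r"
  let ?R = "gc_reducers Lam r Ka" and ?Rs = "rsubsets Lam r"
  obtain U j where kk: "k = (U, j)" by (cases k)
  have Uk: "U \<subseteq> {0..<Lam}" "1 \<le> card U" "card U \<le> Lam - r" "j < Ka (card U)" using k kk Red_iff by auto
  have qlt: "enum ?R k < card ?R" using k enum_bij[OF finite_Red] by (metis atLeastLessThan_iff bij_betwE)
  show "v (enum ?R k) n i = v' (enum ?R k) n i"
  proof (cases "batf Lam r n \<inter> U = {}")
    case False
    then show ?thesis using agreeD[OF ag _ i, of "enum ?R k" n] qlt n kk by auto
  next
    case True
    let ?a = "card U"
    define T where "T = batf Lam r n"
    have T: "T \<in> ?Rs" "enum ?Rs T = n" using bat_props(1)[OF n] T_def by auto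
    have Tp: "T \<subseteq> {0..<Lam}" "card T = r" using T(1) unfolding rsubsets_def by auto
    have fU: "finite U" using Uk(1) finite_subset by blast
    have fT: "finite T" using Tp(1) finite_subset by blast
    define S where "S = U \<union> T"
    have disj: "U \<inter> T = {}" using True T_def by blast
    have cS: "card S = r + ?a" unfolding S_def using card_Un_disjoint[OF fU fT disj] Tp by simp
    have S_U: "S - U = T" unfolding S_def using disj by blast
    have fS: "finite S" unfolding S_def using fU fT by simp
    have US: "U \<in> subs S ?a" unfolding subs_def S_def by auto
    have cs: "card (subs S ?a) = g r ?a" unfolding g_def card_subs[OF fS] cS
      by (metis add.commute binomial_symmetric add_diff_cancel_left' le_add1)
    define p where "p = pp Lam r ?a"
    have pr: "(g r ?a - 1) * p = tt Lam r" "p > 0" using pp_prop[OF r1, of ?a Lam] Uk p_def by auto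
    define c where "c = i div p"
    define b where "b = i mod p"
    have ib: "i = c * p + b" unfolding c_def b_def by simp
    have bp: "b < p" unfolding b_def using pr(2) by simp
    have cg: "c < card (subs S ?a) - 1" unfolding c_def cs using i pr
      by (metis less_mult_imp_div_less mult.commute)
    obtain W where W: "W \<in> subs S ?a" "W \<noteq> U" "idx S ?a U W = c" using idx_surj[OF fS US cg] by blast
    have cW: "card W = ?a" using W(1) unfolding subs_def by auto
    have WR: "(W, j) \<in> ?R" using W(1) Uk cW unfolding Red_iff subs_def S_def using Tp by auto
    have SG: "S \<in> GS Lam r W" unfolding GS_def using W(1) cS cW unfolding subs_def S_def using Uk Tp by auto
    have SU: "S \<in> GS Lam r U" unfolding GS_def S_def using cS Uk Tp unfolding S_def by auto
    have x: "(S, b) \<in> Mset Lam r (W, j)" unfolding Mset_def using SG bp cW p_def by auto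
    define f where "f = (\<lambda>U'. (enum ?R (U', j), enum ?Rs (S - U'), idx S ?a U' W * p + b))"
    have Pos: "Pos Lam r Ka (W, j) (S, b) = insert (f U) (f ` (subs S ?a - {W, U}))"
      unfolding Pos_def f_def using cW US W(2) p_def by auto
    have fU_eq: "f U = (enum ?R k, n, i)" unfolding f_def kk S_U T(2) W(3) ib by simp
    have notin: "f U \<notin> f ` (subs S ?a - {W, U})"
    proof
      assume "f U \<in> f ` (subs S ?a - {W, U})"
      then obtain U' where U'0: "U' \<in> subs S ?a - {W, U}" "f U = f U'" by auto
      then have U': "U' \<in> subs S ?a" "U' \<noteq> U" "enum ?R (U', j) = enum ?R (U, j)"
        unfolding f_def by auto
      have "(U', j) \<in> ?R" using pos_ok(1)[OF r1 WR x, of U'] U'0(1) cW by auto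
      then show False using U' k kk enum_bij[OF finite_Red] by (metis bij_betw_imp_inj_on inj_onD prod.inject)
    qed
    have others: "pv v y = pv v' y" if y: "y \<in> f ` (subs S ?a - {W, U})" for y
    proof -
      obtain U' where U': "U' \<in> subs S ?a" "U' \<noteq> W" "U' \<noteq> U" "y = f U'" using y by auto
      note P = pos_ok[OF r1 WR x, unfolded cW, OF U'(1) U'(2)]
      note G = grp[OF Uk(1) SU US]
      have "(S - U') \<inter> U \<noteq> {}" using G(6)[OF U'(1) U'(3)] .
      moreover have "S - U' \<in> ?Rs" using grp[OF Uk(1) SU U'(1)] by simp
      ultimately have "batf Lam r (enum ?Rs (S - U')) \<inter> U \<noteq> {}"
        using bat_props(2)[of "S - U'"] by simp
      then show ?thesis unfolding U'(4) f_def pv_def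
        apply simp apply (rule agreeD[OF ag]) using P p_def kk by auto
    qed
    have par: "parity v (Pos Lam r Ka (W, j) (S, b)) = parity v' (Pos Lam r Ka (W, j) (S, b))"
      using msg WR lst[OF finite_Mset, of Lam r "(W, j)"] x unfolding Enc_def by auto
    have "pv v (f U) = pv v' (f U)"
      by (rule parity_dec[OF _ notin others par[unfolded Pos]]) (simp add: finite_subs fS)
    then show ?thesis unfolding fU_eq pv_def by simp
  qed
qed

lemma choose_id: assumes "a + r \<le> Lam"
  shows "(Lam choose a) * ((Lam - a) choose r) = (Lam choose r) * ((Lam - r) choose a)"
proof -
  have "(Lam choose (a + r)) * ((a + r) choose a) = (Lam choose a) * ((Lam - a) choose r)"
    using choose_mult[of a "a + r" Lam] assms by simp
  moreover have "(Lam choose (a + r)) * ((a + r) choose r) = (Lam choose r) * ((Lam - r) choose a)"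
    using choose_mult[of r "a + r" Lam] assms by simp
  moreover have "((a + r) choose a) = ((a + r) choose r)"
    by (metis add_diff_cancel_left' binomial_symmetric le_add1)
  ultimately show ?thesis by simp
qed

lemma load_eq:
  assumes r1: "1 \<le> r" and rL: "r \<le> Lam - 1" and L0: "0 < Lam"
  shows "(\<Sum>k\<in>gc_reducers Lam r Ka. real (card (Mset Lam r k))) /
           (real (1 * card (gc_reducers Lam r Ka)) * real (1 * card (rsubsets Lam r)) * real (tt Lam r))
       = (1 / real (\<Sum>\<alpha>\<in>{1..Lam - r}. Ka \<alpha> * (Lam choose \<alpha>))) *
            (\<Sum>\<alpha>\<in>{1..Lam - r}. real (Ka \<alpha> * (Lam - r choose \<alpha>))
                                  / (real ((r + \<alpha>) choose r) - 1))"
proof -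
  let ?R = "gc_reducers Lam r Ka"
  define F where "F = Lam choose r"
  define t where "t = tt Lam r"
  define Q where "Q = (\<Sum>\<alpha>\<in>{1..Lam - r}. Ka \<alpha> * (Lam choose \<alpha>))"
  have F0: "F > 0" unfolding F_def using rL L0 by simp
  have t0: "t > 0" unfolding t_def using pp_prop(3)[OF r1, of 1 Lam] rL L0 by simp
  have cR: "card ?R = Q"
    using sum_Red[of "\<lambda>_. 1" Lam r Ka] unfolding Q_def by simp
  have "(\<Sum>k\<in>?R. card (Mset Lam r k)) = (\<Sum>k\<in>?R. ((Lam - card (fst k)) choose r) * pp Lam r (card (fst k)))"
  proof (rule sum.cong[OF refl])
    fix k assume "k \<in> ?R"
    then have "fst k \<subseteq> {0..<Lam}" unfolding gc_reducers_def by auto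
    then show "card (Mset Lam r k) = ((Lam - card (fst k)) choose r) * pp Lam r (card (fst k))"
      unfolding Mset_def by (simp add: card_cartesian_product card_GS)
  qed
  also have "\<dots> = (\<Sum>a\<in>{1..Lam-r}. Ka a * (Lam choose a) * (((Lam - a) choose r) * pp Lam r a))"
    by (rule sum_Red)
  also have "\<dots> = (\<Sum>a\<in>{1..Lam-r}. F * (Ka a * ((Lam - r) choose a) * pp Lam r a))"
  proof (rule sum.cong[OF refl])
    fix a assume "a \<in> {1..Lam-r}"
    then have "a + r \<le> Lam" by auto
    note h = choose_id[OF this]
    have "Ka a * (Lam choose a) * (((Lam - a) choose r) * pp Lam r a) =
          (Ka a * pp Lam r a) * ((Lam choose a) * ((Lam - a) choose r))" by (simp only: ac_simps)
    also have "\<dots> = (Ka a * pp Lam r a) * (F * ((Lam - r) choose a))" by (simp only: h F_def)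
    also have "\<dots> = F * (Ka a * ((Lam - r) choose a) * pp Lam r a)" by (simp only: ac_simps)
    finally show "Ka a * (Lam choose a) * (((Lam - a) choose r) * pp Lam r a) =
          F * (Ka a * ((Lam - r) choose a) * pp Lam r a)" .
  qed
  also have "\<dots> = F * (\<Sum>a\<in>{1..Lam-r}. Ka a * ((Lam - r) choose a) * pp Lam r a)"
    by (simp add: sum_distrib_left)
  finally have Snat: "(\<Sum>k\<in>?R. card (Mset Lam r k)) =
      F * (\<Sum>a\<in>{1..Lam-r}. Ka a * ((Lam - r) choose a) * pp Lam r a)" .
  have S: "(\<Sum>k\<in>?R. real (card (Mset Lam r k))) =
      real F * (\<Sum>a\<in>{1..Lam-r}. real (Ka a * ((Lam - r) choose a)) * real (pp Lam r a))"
  proof -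
    have "(\<Sum>k\<in>?R. real (card (Mset Lam r k))) = real (\<Sum>k\<in>?R. card (Mset Lam r k))"
      by (simp only: of_nat_sum)
    also have "\<dots> = real F * real (\<Sum>a\<in>{1..Lam-r}. Ka a * ((Lam - r) choose a) * pp Lam r a)"
      by (simp only: Snat of_nat_mult)
    also have "real (\<Sum>a\<in>{1..Lam-r}. Ka a * ((Lam - r) choose a) * pp Lam r a) =
       (\<Sum>a\<in>{1..Lam-r}. real (Ka a * ((Lam - r) choose a)) * real (pp Lam r a))"
      by (simp only: of_nat_sum of_nat_mult)
    finally show ?thesis .
  qed
  have trm: "real (Ka a * ((Lam - r) choose a)) * real (pp Lam r a) / real t =
       real (Ka a * ((Lam - r) choose a)) / (real ((r + a) choose r) - 1)" if a: "a \<in> {1..Lam-r}" for a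
  proof -
    have e: "(g r a - 1) * pp Lam r a = t" "pp Lam r a > 0" using pp_prop[OF r1 a] t_def by auto
    have g2: "g r a \<ge> 2" using g_ge2[OF r1] a by auto
    have "real t = real (g r a - 1) * real (pp Lam r a)" using e(1) by (simp only: of_nat_mult[symmetric])
    moreover have "real (g r a - 1) = real (g r a) - 1" using g2 by (simp add: of_nat_diff)
    ultimately have tq: "real t = (real (g r a) - 1) * real (pp Lam r a)" by simp
    have cancel: "x * p / ((G - 1) * p) = x / (G - 1)" if "p \<noteq> 0" for x p G :: real
      using that by simp
    show ?thesis unfolding tq g_def[symmetric] using cancel e(2) by simp
  qed
  have "(\<Sum>k\<in>?R. real (card (Mset Lam r k))) / (real (1 * card ?R) * real (1 * card (rsubsets Lam r)) * real (tt Lam r))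
      = (1 / real Q) * ((\<Sum>a\<in>{1..Lam-r}. real (Ka a * ((Lam - r) choose a)) * real (pp Lam r a)) / real t)"
    unfolding S cR card_rsubsets F_def[symmetric] t_def[symmetric] using F0 by (simp add: field_simps)
  also have "\<dots> = (1 / real Q) * (\<Sum>a\<in>{1..Lam-r}. real (Ka a * ((Lam - r) choose a)) / (real ((r + a) choose r) - 1))"
  proof -
    have "(\<Sum>a\<in>{1..Lam-r}. real (Ka a * ((Lam - r) choose a)) * real (pp Lam r a)) / real t
        = (\<Sum>a\<in>{1..Lam-r}. real (Ka a * ((Lam - r) choose a)) * real (pp Lam r a) / real t)"
      by (rule sum_divide_distrib)
    also have "\<dots> = (\<Sum>a\<in>{1..Lam-r}. real (Ka a * ((Lam - r) choose a)) / (real ((r + a) choose r) - 1))"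
      by (rule sum.cong[OF refl]) (rule trm)
    finally show ?thesis by simp
  qed
  finally show ?thesis unfolding Q_def .
qed

lemma comp_load: assumes "r \<le> Lam" shows "gc_comp_load Lam r = real r"
proof -
  let ?Rs = "rsubsets Lam r"
  have "(\<Sum>lam<Lam. card {T \<in> ?Rs. lam \<in> T}) = (\<Sum>lam<Lam. \<Sum>T\<in>?Rs. if lam \<in> T then 1 else 0)"
    by (simp add: sum.If_cases finite_rsubsets Int_def)
  also have "\<dots> = (\<Sum>T\<in>?Rs. \<Sum>lam<Lam. if lam \<in> T then 1 else 0)" by (rule sum.swap)
  also have "\<dots> = (\<Sum>T\<in>?Rs. r)"
  proof (rule sum.cong[OF refl])
    fix T assume "T \<in> ?Rs"
    then have "T \<subseteq> {..<Lam}" "card T = r" unfolding rsubsets_def by auto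
    then show "(\<Sum>lam<Lam. if lam \<in> T then 1 else 0) = r"
      by (simp add: sum.If_cases Int_absorb1 Int_absorb2)
  qed
  finally have cnt: "(\<Sum>lam<Lam. card {T \<in> ?Rs. lam \<in> T}) = r * card ?Rs" by simp
  have "card ?Rs > 0" using assms card_rsubsets by simp
  from cnt have "(\<Sum>lam<Lam. real (card {T \<in> ?Rs. lam \<in> T})) = real r * real (card ?Rs)"
    by (simp only: of_nat_sum[symmetric] of_nat_mult)
  then show ?thesis unfolding gc_comp_load_def using \<open>card ?Rs > 0\<close> by simp
qed

theorem theorem5:
  fixes Lam r :: nat and Ka :: "nat \<Rightarrow> nat"
  assumes "0 < Lam" and "1 \<le> r" and "r \<le> Lam - 1"
    and "\<exists>\<alpha>\<in>{1..Lam - r}. Ka \<alpha> > 0"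
  shows "gc_comp_load Lam r = real r \<and>
         gc_achievable Lam r Ka
           ((1 / real (\<Sum>\<alpha>\<in>{1..Lam - r}. Ka \<alpha> * (Lam choose \<alpha>))) *
            (\<Sum>\<alpha>\<in>{1..Lam - r}. real (Ka \<alpha> * (Lam - r choose \<alpha>))
                                  / (real ((r + \<alpha>) choose r) - 1)))"
proof
  show "gc_comp_load Lam r = real r" using comp_load assms by simp
  let ?R = "gc_reducers Lam r Ka"
  have t0: "tt Lam r > 0" using pp_prop(3)[OF assms(2), of 1 Lam] assms by simp
  show "gc_achievable Lam r Ka
           ((1 / real (\<Sum>\<alpha>\<in>{1..Lam - r}. Ka \<alpha> * (Lam choose \<alpha>))) *
            (\<Sum>\<alpha>\<in>{1..Lam - r}. real (Ka \<alpha> * (Lam - r choose \<alpha>))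
                                  / (real ((r + \<alpha>) choose r) - 1)))"
    unfolding gc_achievable_def Let_def
    apply (rule exI[of _ 1], rule exI[of _ 1], rule exI[of _ "tt Lam r"], rule exI[of _ "batf Lam r"],
       rule exI[of _ "\<lambda>k. {enum ?R k}"], rule exI[of _ "Enc Lam r Ka"], rule exI[of _ "\<lambda>k. card (Mset Lam r k)"])
    apply (intro conjI)
    subgoal by simp
    subgoal by simp
    subgoal by (rule t0)
    subgoal using bat_props(1) by simp
    subgoal proof
        fix T assume T: "T \<in> rsubsets Lam r"
        have "{n. n < 1 * card (rsubsets Lam r) \<and> batf Lam r n = T} = {enum (rsubsets Lam r) T}"
          using bat_props(1) bat_props(2)[OF T] by auto
        then show "card {n. n < 1 * card (rsubsets Lam r) \<and> batf Lam r n = T} = 1" by simp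
      qed
    subgoal using enum_bij[OF finite_Red, of Lam r Ka] by (auto dest: bij_betwE)
    subgoal using enum_bij[OF finite_Red, of Lam r Ka] by (auto dest: bij_betw_imp_inj_on inj_onD)
    subgoal unfolding Enc_def by (simp add: length_lst finite_Mset)
    subgoal unfolding mult_1 using enc_eq[OF assms(2)] by blast
    subgoal unfolding mult_1 using dec_ok[OF assms(2)] by blast
    subgoal using load_eq[OF assms(2,3,1)] by (rule sym)
    done
qed

end
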